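(* Let $A$ be a real $n\times n$ matrix with strictly negative diagonal, sign matrix $\mathcal{E}_A=(\epsilon_{ij})$, connectivity graph $G_A$ and clique complex $X(G_A)$. Suppose (i) $\epsilon_{ij}\epsilon_{ji}=1$ whenever $\{i,j\}$ ($i\neq j$) is a clique of $X(G_A)$; (ii) $\epsilon_{ij}\epsilon_{jk}\epsilon_{ki}=-1$ whenever $\{i,j,k\}$ (distinct) is a clique of $X(G_A)$; and (iii) $H^1(X(G_A);\mathbb{Z}_2)=0$. Then $A$ is a bipartite matrix.
   Context: The sign matrix $\mathcal{E}_A=(\epsilon_{ij})$ has $\epsilon_{ij}\in\{1,-1,0\}$ equal to the sign of $A_{ij}$. The connectivity graph $G_A$ is the simple graph on $\{1,\dots,n\}$ containing edge $(ij)$, $i\ne j$, unless $A_{ij}=A_{ji}=0$. $X(G_A)$ is its clique complex: the abstract simplicial complex whose simplices are the cliques (sets of pairwise adjacent vertices); cohomology is simplicial cohomology. A real $n\times n$ matrix $A$ is bipartite if $\{1,\dots,n\}$ can be partitioned into disjoint sets $\sigma,\bar\sigma$ such that: if $i\in\sigma,j\in\bar\sigma$ then $A_{ij}\ge0$ and $A_{ji}\ge0$; and if $i,j\in\sigma$ or $i,j\in\bar\sigma$ then $A_{ij}\le0$ and $A_{ji}\le0$. *)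

theory Defs
  imports "HOL-Analysis.Analysis" "HOL-Library.Z2"
begin

text \<open>Matrices are real n x n matrices indexed by a finite type 'n (vertices = UNIV).\<close>

definition sign_matrix :: "real^'n^'n \<Rightarrow> 'n \<Rightarrow> 'n \<Rightarrow> real" where
  "sign_matrix A i j = sgn (A $ i $ j)"

definition conn_edge :: "real^'n^'n \<Rightarrow> 'n \<Rightarrow> 'n \<Rightarrow> bool" where
  "conn_edge A i j \<longleftrightarrow> i \<noteq> j \<and> \<not> (A $ i $ j = 0 \<and> A $ j $ i = 0)"

definition clique_complex :: "real^'n^'n \<Rightarrow> 'n set set" where
  "clique_complex A = {S. S \<noteq> {} \<and> finite S \<and> (\<forall>i\<in>S. \<forall>j\<in>S. i \<noteq> j \<longrightarrow> conn_edge A i j)}"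

text \<open>Vanishing of the first simplicial cohomology with Z_2 coefficients of a simplicial
  complex X (given as its set of simplices): every 1-cocycle (a function on 1-simplices whose
  coboundary vanishes on all 2-simplices) is the coboundary of a 0-cochain.
  Over Z_2 orientation signs are irrelevant.\<close>
definition H1_Z2_trivial :: "'a set set \<Rightarrow> bool" where
  "H1_Z2_trivial X \<longleftrightarrow>
     (\<forall>c :: 'a set \<Rightarrow> bit.
        (\<forall>\<sigma>\<in>X. card \<sigma> = 3 \<longrightarrow> (\<Sum>\<tau>\<in>{\<tau>. \<tau> \<subseteq> \<sigma> \<and> card \<tau> = 2}. c \<tau>) = 0)
        \<longrightarrow> (\<exists>f :: 'a \<Rightarrow> bit. \<forall>\<sigma>\<in>X. card \<sigma> = 2 \<longrightarrow> c \<sigma> = (\<Sum>v\<in>\<sigma>. f v)))"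

definition bipartite_matrix :: "real^'n^'n \<Rightarrow> bool" where
  "bipartite_matrix A \<longleftrightarrow> (\<exists>\<sigma> :: 'n set.
     (\<forall>i j. (i \<in> \<sigma> \<and> j \<notin> \<sigma>) \<longrightarrow> A $ i $ j \<ge> 0 \<and> A $ j $ i \<ge> 0) \<and>
     (\<forall>i j. ((i \<in> \<sigma> \<and> j \<in> \<sigma>) \<or> (i \<notin> \<sigma> \<and> j \<notin> \<sigma>)) \<longrightarrow> A $ i $ j \<le> 0 \<and> A $ j $ i \<le> 0))"

end

theory Submission
  imports Defs
begin

theorem mainTheorem7:
  fixes A :: "real^'n^'n"
  assumes diag: "\<forall>i. A $ i $ i < 0"
    and cond_i: "\<forall>i j. i \<noteq> j \<and> {i, j} \<in> clique_complex A \<longrightarrow>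
                    sign_matrix A i j * sign_matrix A j i = 1"
    and cond_ii: "\<forall>i j k. i \<noteq> j \<and> j \<noteq> k \<and> i \<noteq> k \<and> {i, j, k} \<in> clique_complex A \<longrightarrow>
                    sign_matrix A i j * sign_matrix A j k * sign_matrix A k i = -1"
    and cond_iii: "H1_Z2_trivial (clique_complex A)"
  shows "bipartite_matrix A"
proof -
  have edge: "{i, j} \<in> clique_complex A \<longleftrightarrow> (i = j \<or> conn_edge A i j)" for i j
    unfolding clique_complex_def conn_edge_def by auto
  have sgnprod: "sgn (A$i$j) * sgn (A$j$i) = 1" if "conn_edge A i j" for i j
    using cond_i that edge[of i j] unfolding sign_matrix_def conn_edge_def by auto
  have symp: "A$i$j > 0 \<longleftrightarrow> A$j$i > 0" for i j
  proof (cases "conn_edge A i j")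
    case True
    from sgnprod[OF this] show ?thesis
      by (cases "A$i$j" "0::real" rule: linorder_cases; cases "A$j$i" "0::real" rule: linorder_cases; simp)
  next
    case False
    then show ?thesis unfolding conn_edge_def by auto
  qed
  have symz: "A$i$j = 0 \<longleftrightarrow> A$j$i = 0" for i j
  proof (cases "conn_edge A i j")
    case True
    from sgnprod[OF this] show ?thesis
      by (cases "A$i$j" "0::real" rule: linorder_cases; cases "A$j$i" "0::real" rule: linorder_cases; simp)
  next
    case False
    then show ?thesis unfolding conn_edge_def by auto
  qed
  define c :: "'n set \<Rightarrow> bit" where
    "c \<tau> = (if \<exists>i j. \<tau> = {i,j} \<and> i \<noteq> j \<and> A$i$j > 0 then 1 else 0)" for \<tau>
  have cval: "c {i,j} = (if A$i$j > 0 then 1 else 0)" if "i \<noteq> j" for i j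
  proof -
    have "(\<exists>i' j'. {i,j} = {i',j'} \<and> i' \<noteq> j' \<and> A$i'$j' > 0) \<longleftrightarrow> A$i$j > 0"
      using that symp by (auto simp: doubleton_eq_iff)
    then show ?thesis unfolding c_def by simp
  qed
  have cocycle: "\<forall>\<sigma>\<in>clique_complex A. card \<sigma> = 3 \<longrightarrow> (\<Sum>\<tau>\<in>{\<tau>. \<tau> \<subseteq> \<sigma> \<and> card \<tau> = 2}. c \<tau>) = 0"
  proof (intro ballI impI)
    fix \<sigma> assume s: "\<sigma> \<in> clique_complex A" and "card \<sigma> = 3"
    then obtain i j k where ijk: "\<sigma> = {i,j,k}" "i \<noteq> j" "j \<noteq> k" "i \<noteq> k"
      by (auto simp: card_3_iff)
    have sub: "{\<tau>. \<tau> \<subseteq> \<sigma> \<and> card \<tau> = 2} = {{i,j},{j,k},{i,k}}"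
      using ijk by (auto simp: card_2_iff)
    have e: "conn_edge A i j" "conn_edge A j k" "conn_edge A k i"
      using s ijk unfolding clique_complex_def by auto
    have nz: "A$i$j \<noteq> 0" "A$j$k \<noteq> 0" "A$k$i \<noteq> 0"
      using e symz unfolding conn_edge_def by blast+
    have p: "sgn (A$i$j) * sgn (A$j$k) * sgn (A$k$i) = -1"
      using cond_ii s ijk unfolding sign_matrix_def by auto
    have d: "{i,j} \<noteq> {j,k}" "{i,j} \<noteq> {i,k}" "{j,k} \<noteq> {i,k}"
      using ijk by (auto simp: doubleton_eq_iff)
    have "(\<Sum>\<tau>\<in>{\<tau>. \<tau> \<subseteq> \<sigma> \<and> card \<tau> = 2}. c \<tau>) = c {i,j} + c {j,k} + c {i,k}"
      unfolding sub using d by (simp add: add.assoc del: add_bit_eq_xor)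
    also have "\<dots> = 0"
      using ijk nz p symp[of i k]
      by (cases "A$i$j" "0::real" rule: linorder_cases; cases "A$j$k" "0::real" rule: linorder_cases;
          cases "A$k$i" "0::real" rule: linorder_cases; simp add: cval)
    finally show "(\<Sum>\<tau>\<in>{\<tau>. \<tau> \<subseteq> \<sigma> \<and> card \<tau> = 2}. c \<tau>) = 0" .
  qed
  then obtain f :: "'n \<Rightarrow> bit" where
    f: "\<forall>\<sigma>\<in>clique_complex A. card \<sigma> = 2 \<longrightarrow> c \<sigma> = (\<Sum>v\<in>\<sigma>. f v)"
    using cond_iii unfolding H1_Z2_trivial_def by blast
  have fe: "(if A$i$j > 0 then 1 else 0) = f i + f j" if "conn_edge A i j" for i j
  proof -
    have "i \<noteq> j" using that unfolding conn_edge_def by auto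
    moreover have "{i,j} \<in> clique_complex A" using edge that by auto
    ultimately show ?thesis using f cval[of i j] by auto
  qed
  have bit_cases: "b = 0 \<or> b = 1" for b :: bit by auto
  show ?thesis unfolding bipartite_matrix_def
  proof (rule exI[of _ "{i. f i = 1}"], rule conjI; (intro allI impI)?)
    fix i j assume a: "i \<in> {i. f i = 1} \<and> j \<notin> {i. f i = 1}"
    show "A$i$j \<ge> 0 \<and> A$j$i \<ge> 0"
    proof (cases "conn_edge A i j")
      case True
      from fe[OF True] a have "A$i$j > 0" using bit_cases[of "f j"] by (auto split: if_splits)
      then show ?thesis using symp[of i j] by (auto simp: not_less)
    next
      case False
      then show ?thesis using a unfolding conn_edge_def by auto
    qed
  next
    fix i j assume a: "i \<in> {i. f i = 1} \<and> j \<in> {i. f i = 1} \<or> i \<notin> {i. f i = 1} \<and> j \<notin> {i. f i = 1}"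
    show "A$i$j \<le> 0 \<and> A$j$i \<le> 0"
    proof (cases "conn_edge A i j")
      case True
      from fe[OF True] a have "\<not> A$i$j > 0" using bit_cases[of "f j"] bit_cases[of "f i"]
        by (auto split: if_splits)
      then show ?thesis using symp[of i j] by (auto simp: not_less)
    next
      case False
      then show ?thesis using diag unfolding conn_edge_def by (cases "i = j") (auto simp: less_imp_le)
    qed
  qed
qed

end
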